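(* For every $n\ge1$, the co-cloaktic monoid $\mathcal A_n^*/{\equiv^{\mathrm{co}}_{\mathrm{clk}}}$ satisfies every semigroup identity satisfied by the monoid $\mathrm{TMat}_n(\mathbb T)$ of $n\times n$ upper triangular tropical matrices.
   Context: $\mathcal A_n=\{a_1<\cdots<a_n\}$. For $w\in\mathcal A_n^*$, $L_{[i,j]}(w)$ is the maximal length of a nondecreasing (not necessarily contiguous) subword of $w$ with all letters in $\{a_i,\dots,a_j\}$; $u\equiv_{\mathrm{clk}}v$ iff $L_{[i,j]}(u)=L_{[i,j]}(v)$ for all $1\le i\le j\le n$. $\mathrm{cmr}(a_\ell)=a_na_{n-1}\cdots a_1$ with $a_{n-\ell+1}$ omitted, extended multiplicatively to words; $u\equiv^{\mathrm{co}}_{\mathrm{clk}}v$ iff $\mathrm{cmr}(u)\equiv_{\mathrm{clk}}\mathrm{cmr}(v)$. $\mathrm{TMat}_n(\mathbb T)$: upper triangular matrices over $\mathbb T=\mathbb R\cup\{-\infty\}$ with max-plus product. A semigroup identity is a formal equality $u=v$ of two distinct nonempty words over variables; $S$ satisfies it if $\varphi(u)=\varphi(v)$ for every homomorphism $\varphi$ from the free semigroup on the variables to $S$. *)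

theory Defs
  imports "HOL-Library.Extended_Real"
begin

(* Alphabet A_n: letter a_i is represented by the natural number i, 1 <= i <= n.
   Words over A_n are nat lists with all letters in {1..n}. *)

definition word_over :: "nat \<Rightarrow> nat list \<Rightarrow> bool" where
  "word_over n w \<longleftrightarrow> set w \<subseteq> {1..n}"

definition Lij :: "nat \<Rightarrow> nat \<Rightarrow> nat list \<Rightarrow> nat" where
  "Lij i j w = Max {length s | s. s \<in> set (subseqs w) \<and> sorted s \<and> set s \<subseteq> {i..j}}"

definition clk_equiv :: "nat \<Rightarrow> nat list \<Rightarrow> nat list \<Rightarrow> bool" where
  "clk_equiv n u v \<longleftrightarrow> (\<forall>i j. 1 \<le> i \<and> i \<le> j \<and> j \<le> n \<longrightarrow> Lij i j u = Lij i j v)"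

definition cmr_letter :: "nat \<Rightarrow> nat \<Rightarrow> nat list" where
  "cmr_letter n l = filter (\<lambda>x. x \<noteq> n - l + 1) (rev [1..<n+1])"

definition cmr :: "nat \<Rightarrow> nat list \<Rightarrow> nat list" where
  "cmr n w = concat (map (cmr_letter n) w)"

definition coclk_equiv :: "nat \<Rightarrow> nat list \<Rightarrow> nat list \<Rightarrow> bool" where
  "coclk_equiv n u v \<longleftrightarrow> clk_equiv n (cmr n u) (cmr n v)"

(* The co-cloaktic monoid A_n^*/coclk satisfies the semigroup identity u = v
   (u, v words over variables of type nat): every semigroup homomorphism from
   the free semigroup to the quotient monoid is determined by an assignment of
   (representative) words over A_n to the variables, possibly empty. *)
definition coclk_satisfies :: "nat \<Rightarrow> nat list \<Rightarrow> nat list \<Rightarrow> bool" where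
  "coclk_satisfies n u v \<longleftrightarrow>
     (\<forall>\<sigma> :: nat \<Rightarrow> nat list. (\<forall>x. word_over n (\<sigma> x)) \<longrightarrow>
        coclk_equiv n (concat (map \<sigma> u)) (concat (map \<sigma> v)))"

(* Tropical semiring T = R \<union> {-\<infinity>}, modelled inside ereal as values \<noteq> \<infinity>.
   n x n matrices: functions nat \<Rightarrow> nat \<Rightarrow> ereal, only indices < n matter. *)
type_synonym tmat = "nat \<Rightarrow> nat \<Rightarrow> ereal"

definition tmat_upper :: "nat \<Rightarrow> tmat \<Rightarrow> bool" where
  "tmat_upper n A \<longleftrightarrow>
     (\<forall>i j. A i j \<noteq> \<infinity>) \<and>
     (\<forall>i j. (i \<ge> n \<or> j \<ge> n) \<longrightarrow> A i j = -\<infinity>) \<and>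
     (\<forall>i j. i < n \<and> j < n \<and> j < i \<longrightarrow> A i j = -\<infinity>)"

definition tmul :: "nat \<Rightarrow> tmat \<Rightarrow> tmat \<Rightarrow> tmat" where
  "tmul n A B = (\<lambda>i j. if i < n \<and> j < n then Max ((\<lambda>k. A i k + B k j) ` {..<n}) else -\<infinity>)"

definition tmat_eval :: "nat \<Rightarrow> (nat \<Rightarrow> tmat) \<Rightarrow> nat list \<Rightarrow> tmat" where
  "tmat_eval n \<phi> w = foldl (tmul n) (\<phi> (hd w)) (map \<phi> (tl w))"

definition tmat_satisfies :: "nat \<Rightarrow> nat list \<Rightarrow> nat list \<Rightarrow> bool" where
  "tmat_satisfies n u v \<longleftrightarrow>
     (\<forall>\<phi>. (\<forall>x. tmat_upper n (\<phi> x)) \<longrightarrow> tmat_eval n \<phi> u = tmat_eval n \<phi> v)"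

end

theory Submission
  imports Defs "HOL-Library.Sublist"
begin

definition valid :: "nat \<Rightarrow> nat \<Rightarrow> nat list \<Rightarrow> nat list \<Rightarrow> bool" where
  "valid i j w s \<longleftrightarrow> subseq s w \<and> sorted s \<and> set s \<subseteq> {i..j}"

lemma Lij_alt: "Lij i j w = Max (length ` {s. valid i j w s})"
proof -
  have "{length s | s. s \<in> set (subseqs w) \<and> sorted s \<and> set s \<subseteq> {i..j}}
        = length ` {s. valid i j w s}"
    by (auto simp: valid_def)
  thus ?thesis by (simp add: Lij_def)
qed

lemma valid_fin: "finite {s. valid i j w s}"
proof -
  have "{s. valid i j w s} \<subseteq> set (subseqs w)" by (auto simp: valid_def)
  thus ?thesis by (rule finite_subset) simp
qed

lemma valid_ne: "valid i j w []" by (simp add: valid_def)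

lemma Lij_ge: "valid i j w s \<Longrightarrow> length s \<le> Lij i j w"
  unfolding Lij_alt using valid_fin by (intro Max_ge) auto

lemma Lij_ex: "\<exists>s. valid i j w s \<and> length s = Lij i j w"
proof -
  have "Max (length ` {s. valid i j w s}) \<in> length ` {s. valid i j w s}"
    using valid_fin[of i j w] valid_ne[of i j w] by (intro Max_in) blast+
  thus ?thesis unfolding Lij_alt by auto
qed

lemma A1:
  assumes "i \<le> k" "k \<le> j"
  shows "Lij i k W + Lij k j V \<le> Lij i j (W @ V)"
proof -
  obtain s1 where s1: "valid i k W s1" "length s1 = Lij i k W" using Lij_ex by blast
  obtain s2 where s2: "valid k j V s2" "length s2 = Lij k j V" using Lij_ex by blast
  have "\<forall>x\<in>set s1. \<forall>y\<in>set s2. x \<le> y"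
    using s1(1) s2(1) unfolding valid_def by fastforce
  then have "valid i j (W @ V) (s1 @ s2)"
    using s1(1) s2(1) assms unfolding valid_def
    by (auto simp: sorted_append intro: list_emb_append_mono)
  from Lij_ge[OF this] s1 s2 show ?thesis by simp
qed

lemma A2:
  assumes "i \<le> j"
  shows "\<exists>k\<in>{i..j}. Lij i j (W @ V) \<le> Lij i k W + Lij k j V"
proof -
  obtain s where s: "valid i j (W @ V) s" "length s = Lij i j (W @ V)" using Lij_ex by blast
  then obtain s1 s2 where sp: "s = s1 @ s2" "subseq s1 W" "subseq s2 V"
    unfolding valid_def by (auto elim: subseq_appendE)
  define k where "k = (if s1 = [] then i else last s1)"
  have srt: "sorted s1" "sorted s2" "\<forall>x\<in>set s1. \<forall>y\<in>set s2. x \<le> y"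
    using s(1) sp unfolding valid_def by (auto simp: sorted_append)
  have rng: "set s1 \<subseteq> {i..j}" "set s2 \<subseteq> {i..j}" using s(1) sp unfolding valid_def by auto
  have kin: "k \<in> {i..j}"
  proof (cases "s1 = []")
    case True thus ?thesis using assms by (simp add: k_def)
  next
    case False hence "last s1 \<in> set s1" by simp
    hence "last s1 \<in> {i..j}" using rng(1) by blast
    thus ?thesis using False by (simp add: k_def)
  qed
  have v1: "valid i k W s1"
  proof -
    have "\<forall>x\<in>set s1. x \<le> k"
    proof (cases "s1 = []")
      case False
      then obtain ys y where "s1 = ys @ [y]" by (metis rev_exhaust)
      thus ?thesis using srt(1) by (auto simp: k_def sorted_append)
    qed (simp)
    thus ?thesis using sp srt rng unfolding valid_def by auto
  qed
  have v2: "valid k j V s2"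
  proof -
    have "\<forall>x\<in>set s2. k \<le> x"
      using srt(3) rng by (cases "s1 = []") (auto simp: k_def)
    thus ?thesis using sp srt rng unfolding valid_def by auto
  qed
  have "Lij i j (W @ V) \<le> Lij i k W + Lij k j V"
    using Lij_ge[OF v1] Lij_ge[OF v2] s(2) sp by simp
  thus ?thesis using kin by blast
qed

definition Lm :: "nat \<Rightarrow> nat list \<Rightarrow> tmat" where
  "Lm n w = (\<lambda>p q. if p < n \<and> q < n \<and> p \<le> q then ereal (real (Lij (Suc p) (Suc q) w)) else -\<infinity>)"

lemma Lm_upper: "tmat_upper n (Lm n w)"
  by (auto simp: tmat_upper_def Lm_def)

lemma Lm_mul: "tmul n (Lm n W) (Lm n V) = Lm n (W @ V)"
proof (intro ext)
  fix p q
  show "tmul n (Lm n W) (Lm n V) p q = Lm n (W @ V) p q"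
  proof (cases "p < n \<and> q < n")
    case False thus ?thesis by (auto simp: tmul_def Lm_def)
  next
    case pq: True
    let ?f = "\<lambda>k. Lm n W p k + Lm n V k q"
    have fin: "finite (?f ` {..<n})" by simp
    have ne: "?f ` {..<n} \<noteq> {}" using pq by auto
    show ?thesis
    proof (cases "p \<le> q")
      case False
      have "\<forall>x\<in>?f ` {..<n}. x = -\<infinity>" using False by (auto simp: Lm_def)
      moreover obtain y where "y \<in> ?f ` {..<n}" using ne by blast
      ultimately have "-\<infinity> \<in> ?f ` {..<n}" by metis
      hence "Max (?f ` {..<n}) = -\<infinity>"
        using fin \<open>\<forall>x\<in>?f ` {..<n}. x = -\<infinity>\<close> by (intro Max_eqI) auto
      thus ?thesis using pq False by (simp add: tmul_def Lm_def)
    next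
      case le: True
      let ?R = "ereal (real (Lij (Suc p) (Suc q) (W @ V)))"
      have ub: "\<forall>x\<in>?f ` {..<n}. x \<le> ?R"
      proof
        fix x assume "x \<in> ?f ` {..<n}"
        then obtain k where k: "k < n" "x = ?f k" by auto
        show "x \<le> ?R"
        proof (cases "p \<le> k \<and> k \<le> q")
          case True
          have "Lij (Suc p) (Suc k) W + Lij (Suc k) (Suc q) V \<le> Lij (Suc p) (Suc q) (W @ V)"
            using True by (intro A1) auto
          thus ?thesis using k True pq by (simp add: Lm_def)
        next
          case False thus ?thesis using k by (auto simp: Lm_def)
        qed
      qed
      obtain k' where k': "k' \<in> {Suc p..Suc q}"
        "Lij (Suc p) (Suc q) (W @ V) \<le> Lij (Suc p) k' W + Lij k' (Suc q) V"
        using A2[of "Suc p" "Suc q" W V] le by auto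
      define k where "k = k' - 1"
      have kk: "k' = Suc k" "p \<le> k" "k \<le> q" using k' by (auto simp: k_def)
      have eq: "Lij (Suc p) (Suc q) (W @ V) = Lij (Suc p) (Suc k) W + Lij (Suc k) (Suc q) V"
        using A1[of "Suc p" "Suc k" "Suc q" W V] k' kk by auto
      have "?f k = ?R" using kk pq eq by (simp add: Lm_def)
      moreover have "k < n" using kk pq by auto
      ultimately have "?R \<in> ?f ` {..<n}" using image_eqI[of ?R ?f k "{..<n}"] by simp
      hence "Max (?f ` {..<n}) = ?R" using ub fin by (intro Max_eqI) auto
      thus ?thesis using pq le by (simp add: tmul_def Lm_def)
    qed
  qed
qed

lemma foldl_Lm:
  "foldl (tmul n) (Lm n W) (map (\<lambda>x. Lm n (\<sigma> x)) xs) = Lm n (W @ concat (map \<sigma> xs))"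
  by (induction xs arbitrary: W) (simp_all add: Lm_mul)

lemma eval_Lm:
  assumes "u \<noteq> []"
  shows "tmat_eval n (\<lambda>x. Lm n (\<sigma> x)) u = Lm n (concat (map \<sigma> u))"
  using assms by (cases u) (simp_all add: tmat_eval_def foldl_Lm)

lemma cmr_concat: "cmr n (concat (map \<sigma> u)) = concat (map (\<lambda>x. cmr n (\<sigma> x)) u)"
  by (induction u) (simp_all add: cmr_def)

theorem mainTheorem10:
  fixes n :: nat and u v :: "nat list"
  assumes "1 \<le> n" and "u \<noteq> []" and "v \<noteq> []" and "u \<noteq> v"
    and "tmat_satisfies n u v"
  shows "coclk_satisfies n u v"
  unfolding coclk_satisfies_def coclk_equiv_def clk_equiv_def
proof (intro allI impI)
  fix \<sigma> :: "nat \<Rightarrow> nat list" and i j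
  assume ij: "1 \<le> i \<and> i \<le> j \<and> j \<le> n"
  let ?s = "\<lambda>x. cmr n (\<sigma> x)"
  have "tmat_eval n (\<lambda>x. Lm n (?s x)) u = tmat_eval n (\<lambda>x. Lm n (?s x)) v"
  proof -
    have "\<forall>\<phi>. (\<forall>x. tmat_upper n (\<phi> x)) \<longrightarrow> tmat_eval n \<phi> u = tmat_eval n \<phi> v"
      using assms(5) unfolding tmat_satisfies_def .
    from spec[OF this, of "\<lambda>x. Lm n (?s x)"] show ?thesis using Lm_upper by simp
  qed
  hence E: "Lm n (concat (map ?s u)) = Lm n (concat (map ?s v))"
    using eval_Lm[OF assms(2)] eval_Lm[OF assms(3)] by simp
  have "Lm n (concat (map ?s u)) (i - 1) (j - 1) = Lm n (concat (map ?s v)) (i - 1) (j - 1)"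
    using E by simp
  hence "Lij i j (concat (map ?s u)) = Lij i j (concat (map ?s v))"
  proof -
    have a: "i - 1 < n" "j - 1 < n" "i - 1 \<le> j - 1" "Suc (i - 1) = i" "Suc (j - 1) = j"
      using ij by auto
    show ?thesis using \<open>Lm n (concat (map ?s u)) (i - 1) (j - 1) = Lm n (concat (map ?s v)) (i - 1) (j - 1)\<close>
      unfolding Lm_def using a by (simp only: if_True a) simp
  qed
  thus "Lij i j (cmr n (concat (map \<sigma> u))) = Lij i j (cmr n (concat (map \<sigma> v)))"
    by (simp add: cmr_concat)
qed

end
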